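(* (i) For any $W \in \mathbb{R}^{m \times n}$ with $m < 2n$, the map $x \mapsto \operatorname{ReLU}(Wx)$ from $\mathbb{R}^n$ to $\mathbb{R}^m$ is not injective. (ii) If $W \in \mathbb{R}^{2n \times n}$ has a directed spanning set of $\mathbb{R}^n$ with respect to every $x \in \mathbb{R}^n$, then, up to a rearrangement of its rows, $W = \begin{bmatrix} B \\ -DB \end{bmatrix}$, where $B \in \mathbb{R}^{n\times n}$ is invertible (its rows form a basis of $\mathbb{R}^n$) and $D \in \mathbb{R}^{n \times n}$ is a diagonal matrix with strictly positive diagonal entries.
   Context: $\operatorname{ReLU}(y)=\max(y,0)$ componentwise. A matrix $W$ with rows $w_i\in\mathbb{R}^n$ has a directed spanning set (DSS) of $\mathbb{R}^n$ with respect to $x \in \mathbb{R}^n$ if the rows $\{w_i : \langle x, w_i\rangle \geq 0\}$ span $\mathbb{R}^n$. *)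

theory Defs
  imports "HOL-Analysis.Analysis"
begin

definition relu :: "real ^ 'm \<Rightarrow> real ^ 'm" where
  "relu y = (\<chi> i. max (y $ i) 0)"

definition has_dss :: "real ^ 'n ^ 'm \<Rightarrow> real ^ 'n \<Rightarrow> bool" where
  "has_dss W x \<longleftrightarrow> span {W $ i | i. x \<bullet> (W $ i) \<ge> 0} = UNIV"

end

theory Submission
  imports Defs
begin

lemma exists_generic:
  fixes F :: "(real^'n) set"
  assumes "finite F" "0 \<notin> F"
  shows "\<exists>z. \<forall>v\<in>F. z \<bullet> v \<noteq> 0"
proof -
  have "negligible (\<Union>v\<in>F. {z. v \<bullet> z = 0})"
    using assms by (intro negligible_Union) (auto intro!: negligible_hyperplane)
  then have "(\<Union>v\<in>F. {z. v \<bullet> z = 0}) \<noteq> UNIV" using non_negligible_UNIV by metis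
  then obtain z where "z \<notin> (\<Union>v\<in>F. {z. v \<bullet> z = 0})" by blast
  then have "\<forall>v\<in>F. v \<bullet> z \<noteq> 0" by blast
  then show ?thesis by (intro exI[of _ z]) (simp add: inner_commute)
qed


lemma inj_dss:
  fixes W :: "real^'n^'m"
  assumes inj: "inj (\<lambda>x. relu (W *v x))"
  shows "has_dss W x"
proof (rule ccontr)
  let ?S = "{W$i | i. x \<bullet> (W$i) \<ge> 0}"
  assume "\<not> has_dss W x"
  then have ns: "span ?S \<noteq> UNIV" by (simp add: has_dss_def)
  have "dim ?S < DIM(real^'n)"
    using dim_eq_full[of ?S] dim_subset_UNIV[of ?S] ns by (simp add: le_less)
  then obtain v where v0: "v \<noteq> 0" and vo: "\<And>y. y \<in> span ?S \<Longrightarrow> orthogonal v y"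
    using orthogonal_to_subspace_exists by blast
  have orth: "v \<bullet> W$i = 0" if "x \<bullet> W$i \<ge> 0" for i
    using vo[of "W$i"] that by (auto simp: orthogonal_def intro: span_base)
  have ev: "\<forall>\<^sub>F e in at_right (0::real). \<forall>i. x \<bullet> W$i < 0 \<longrightarrow> x \<bullet> W$i + e * (v \<bullet> W$i) < 0"
  proof (rule eventually_all_finite)
    fix i
    show "\<forall>\<^sub>F e in at_right (0::real). x \<bullet> W$i < 0 \<longrightarrow> x \<bullet> W$i + e * (v \<bullet> W$i) < 0"
    proof (cases "x \<bullet> W$i < 0")
      case True
      have "((\<lambda>e. x \<bullet> W$i + e * (v \<bullet> W$i)) \<longlongrightarrow> x \<bullet> W$i + 0 * (v \<bullet> W$i)) (at_right 0)"
        by (intro tendsto_intros)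
      then have "\<forall>\<^sub>F e in at_right (0::real). x \<bullet> W$i + e * (v \<bullet> W$i) < 0"
        using True by (intro order_tendstoD(2)) auto
      then show ?thesis by eventually_elim auto
    qed auto
  qed
  have "\<forall>\<^sub>F e in at_right (0::real). 0 < e \<and> (\<forall>i. x \<bullet> W$i < 0 \<longrightarrow> x \<bullet> W$i + e * (v \<bullet> W$i) < 0)"
    using ev eventually_at_right_less by (rule_tac eventually_conj) auto
  then obtain e where e0: "e > 0" and he: "\<And>i. x \<bullet> W$i < 0 \<Longrightarrow> x \<bullet> W$i + e * (v \<bullet> W$i) < 0"
    using eventually_happens'[OF trivial_limit_at_right_real] by blast
  have "relu (W *v (x + e *\<^sub>R v)) = relu (W *v x)"
  proof -
    have "max (W$k \<bullet> (x + e *\<^sub>R v)) 0 = max (W$k \<bullet> x) 0" for k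
    proof (cases "x \<bullet> W$k \<ge> 0")
      case True
      then show ?thesis using orth[OF True] by (simp add: inner_add_right inner_commute)
    next
      case False
      then show ?thesis using he[of k] by (simp add: inner_add_right inner_commute)
    qed
    then show ?thesis by (simp add: relu_def matrix_vector_mul_component vec_eq_iff)
  qed
  moreover have "x + e *\<^sub>R v \<noteq> x" using e0 v0 by simp
  ultimately show False using inj by (meson injD)
qed


lemma dss_span:
  fixes V :: "real^'n^'k"
  assumes "has_dss V z" "\<forall>j. V$j \<noteq> 0 \<longrightarrow> z \<bullet> V$j \<noteq> 0"
  shows "span ((\<lambda>j. V$j) ` {j. z \<bullet> V$j > 0}) = UNIV"
proof -
  let ?T = "(\<lambda>j. V$j) ` {j. z \<bullet> V$j > 0}"
  have s: "span {V$i | i. z \<bullet> V$i \<ge> 0} = UNIV" using assms(1) by (simp add: has_dss_def)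
  have sub: "{V$i | i. z \<bullet> V$i \<ge> 0} \<subseteq> insert 0 ?T"
  proof
    fix v assume "v \<in> {V$i | i. z \<bullet> V$i \<ge> 0}"
    then obtain i where v: "v = V$i" and i: "z \<bullet> V$i \<ge> 0" by blast
    show "v \<in> insert 0 ?T"
    proof (cases "V$i = 0")
      case True then show ?thesis using v by simp
    next
      case False
      then have "z \<bullet> V$i > 0" using assms(2) i by force
      then show ?thesis using v by blast
    qed
  qed
  have "span {V$i | i. z \<bullet> V$i \<ge> 0} \<subseteq> span (insert 0 ?T)" using sub by (rule span_mono)
  then have "UNIV \<subseteq> span ?T" using s by simp
  then show ?thesis by blast
qed

lemma dss_count:
  fixes V :: "real^'n^'k"
  assumes "has_dss V z" "\<forall>j. V$j \<noteq> 0 \<longrightarrow> z \<bullet> V$j \<noteq> 0"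
  shows "CARD('n) \<le> card ((\<lambda>j. V$j) ` {j. z \<bullet> V$j > 0})"
proof -
  let ?T = "(\<lambda>j. V$j) ` {j. z \<bullet> V$j > 0}"
  have "dim (UNIV :: (real^'n) set) \<le> card ?T"
  proof (rule span_card_ge_dim)
    show "?T \<subseteq> UNIV" by simp
    show "UNIV \<subseteq> span ?T" using dss_span[OF assms] by simp
    show "finite ?T" by simp
  qed
  then show ?thesis by simp
qed





lemma part1:
  fixes W :: "real ^ 'n ^ 'm"
  assumes "CARD('m) < 2 * CARD('n)"
  shows "\<not> inj (\<lambda>x. relu (W *v x))"
proof
  assume inj: "inj (\<lambda>x. relu (W *v x))"
  have dss: "has_dss W x" for x using inj_dss[OF inj] .
  obtain z where z: "\<forall>v\<in>range (\<lambda>j. W$j) - {0}. z \<bullet> v \<noteq> 0"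
    using exists_generic[of "range (\<lambda>j. W$j) - {0}"] by auto
  have g1: "\<forall>j. W$j \<noteq> 0 \<longrightarrow> z \<bullet> W$j \<noteq> 0" using z by auto
  have g2: "\<forall>j. W$j \<noteq> 0 \<longrightarrow> (-z) \<bullet> W$j \<noteq> 0" using z by auto
  have c1: "CARD('n) \<le> card {j. z \<bullet> W$j > 0}"
    using dss_count[OF dss g1] card_image_le[of "{j. z \<bullet> W$j > 0}" "\<lambda>j. W$j"] by simp
  have c2: "CARD('n) \<le> card {j. z \<bullet> W$j < 0}"
    using dss_count[OF dss g2] card_image_le[of "{j. (-z) \<bullet> W$j > 0}" "\<lambda>j. W$j"] by simp
  have "card ({j. z \<bullet> W$j > 0} \<union> {j. z \<bullet> W$j < 0}) = card {j. z \<bullet> W$j > 0} + card {j. z \<bullet> W$j < 0}"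
    by (rule card_Un_disjoint) auto
  moreover have "card ({j. z \<bullet> W$j > 0} \<union> {j. z \<bullet> W$j < 0}) \<le> CARD('m)"
    by (rule card_mono) auto
  ultimately show False using c1 c2 assms by linarith
qed

locale two = fixes V :: "real^'n^'k"
  assumes card2: "CARD('k) = 2 * CARD('n)" and dss: "\<And>x. has_dss V x"
begin

lemma generic_counts:
  assumes g: "\<forall>j. V$j \<noteq> 0 \<longrightarrow> z \<bullet> V$j \<noteq> 0"
  shows "card {j. z \<bullet> V$j > 0} = CARD('n)" "card {j. z \<bullet> V$j < 0} = CARD('n)"
    "card ((\<lambda>j. V$j) ` {j. z \<bullet> V$j > 0}) = CARD('n)"
    "{j. z \<bullet> V$j > 0} \<union> {j. z \<bullet> V$j < 0} = UNIV"
proof -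
  have g2: "\<forall>j. V$j \<noteq> 0 \<longrightarrow> (-z) \<bullet> V$j \<noteq> 0" using g by auto
  have c1: "CARD('n) \<le> card ((\<lambda>j. V$j) ` {j. z \<bullet> V$j > 0})"
    using dss_count[OF dss g] by simp
  have c1': "card ((\<lambda>j. V$j) ` {j. z \<bullet> V$j > 0}) \<le> card {j. z \<bullet> V$j > 0}"
    by (rule card_image_le) auto
  have c2: "CARD('n) \<le> card {j. z \<bullet> V$j < 0}"
    using dss_count[OF dss g2] card_image_le[of "{j. (-z) \<bullet> V$j > 0}" "\<lambda>j. V$j"] by simp
  have u: "card ({j. z \<bullet> V$j > 0} \<union> {j. z \<bullet> V$j < 0}) = card {j. z \<bullet> V$j > 0} + card {j. z \<bullet> V$j < 0}"
    by (rule card_Un_disjoint) auto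
  moreover have le: "card ({j. z \<bullet> V$j > 0} \<union> {j. z \<bullet> V$j < 0}) \<le> CARD('k)"
    by (rule card_mono) auto
  ultimately show "card {j. z \<bullet> V$j > 0} = CARD('n)" "card {j. z \<bullet> V$j < 0} = CARD('n)"
    "card ((\<lambda>j. V$j) ` {j. z \<bullet> V$j > 0}) = CARD('n)"
    using c1 c1' c2 card2 by linarith+
  then show "{j. z \<bullet> V$j > 0} \<union> {j. z \<bullet> V$j < 0} = UNIV"
    using u card2 by (intro card_eq_UNIV_imp_eq_UNIV) auto
qed

lemma nonzero: "V$j \<noteq> 0"
proof -
  obtain z where z: "\<forall>v\<in>range (\<lambda>j. V$j) - {0}. z \<bullet> v \<noteq> 0"
    using exists_generic[of "range (\<lambda>j. V$j) - {0}"] by auto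
  have g: "\<forall>j. V$j \<noteq> 0 \<longrightarrow> z \<bullet> V$j \<noteq> 0" using z by auto
  have "j \<in> {j. z \<bullet> V$j > 0} \<union> {j. z \<bullet> V$j < 0}" using generic_counts(4)[OF g] by simp
  then show ?thesis by auto
qed

lemma generic_struct:
  assumes g: "\<forall>j. z \<bullet> V$j \<noteq> 0"
  shows "inj_on (\<lambda>j. V$j) {j. z \<bullet> V$j > 0}" "independent ((\<lambda>j. V$j) ` {j. z \<bullet> V$j > 0})"
    "card {j. z \<bullet> V$j > 0} = CARD('n)"
proof -
  have g': "\<forall>j. V$j \<noteq> 0 \<longrightarrow> z \<bullet> V$j \<noteq> 0" using g by auto
  note c = generic_counts[OF g']
  show "inj_on (\<lambda>j. V$j) {j. z \<bullet> V$j > 0}"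
    using c by (intro eq_card_imp_inj_on) auto
  show "independent ((\<lambda>j. V$j) ` {j. z \<bullet> V$j > 0})"
    using c dss_span[OF dss g'] by (intro card_le_dim_spanning[of _ UNIV]) auto
  show "card {j. z \<bullet> V$j > 0} = CARD('n)" using c by simp
qed

end



lemma inv_rows:
  fixes f :: "'n \<Rightarrow> real^'n"
  assumes inj: "inj f" and ind: "independent (range f)"
  shows "invertible (\<chi> i. f i)"
proof -
  have key: "\<forall>c. (\<Sum>i\<in>UNIV. c i *s row i (\<chi> i. f i)) = 0 \<longrightarrow> (\<forall>i. c i = 0)"
  proof (rule allI, rule impI)
    fix c :: "'n \<Rightarrow> real"
    assume "(\<Sum>i\<in>UNIV. c i *s row i (\<chi> i. f i)) = 0"
    then have s: "(\<Sum>i\<in>UNIV. c i *\<^sub>R f i) = 0"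
      by (simp add: row_def scalar_mult_eq_scaleR)
    have "(\<Sum>v\<in>range f. c (inv f v) *\<^sub>R v) = (\<Sum>i\<in>UNIV. c i *\<^sub>R f i)"
      using inj by (simp add: sum.reindex inv_f_f)
    then have "\<forall>v\<in>range f. c (inv f v) = 0"
      using ind s unfolding independent_explicit by metis
    then show "\<forall>i. c i = 0" using inj by (metis inv_f_f rangeI)
  qed
  then show ?thesis using matrix_right_invertible_independent_rows invertible_right_inverse by metis
qed

context two begin

lemma pairing: "\<exists>j c. c < 0 \<and> V$j = c *\<^sub>R V$i"
proof -
  define w where "w = V$i"
  have w0: "w \<noteq> 0" using nonzero by (simp add: w_def)
  have ww: "w \<bullet> w > 0" using w0 by simp
  define l where "l j = (V$j \<bullet> w) / (w \<bullet> w)" for j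
  define u where "u j = V$j - l j *\<^sub>R w" for j
  obtain y where y: "\<forall>v\<in>range u - {0}. y \<bullet> v \<noteq> 0"
    using exists_generic[of "range u - {0}"] by auto
  define x where "x = y - ((y \<bullet> w) / (w \<bullet> w)) *\<^sub>R w"
  have xV: "x \<bullet> V$j = y \<bullet> u j" for j
    by (simp add: x_def u_def l_def inner_diff_left inner_diff_right inner_commute)
  have xw: "x \<bullet> w = 0" using ww by (simp add: x_def inner_diff_left)
  have par: "V$j = l j *\<^sub>R w" if "u j = 0" for j using that by (simp add: u_def)
  have lnz: "l j \<noteq> 0" if "u j = 0" for j using par[OF that] nonzero[of j] by auto
  have xnz: "x \<bullet> V$j \<noteq> 0" if "u j \<noteq> 0" for j using y that xV by auto
  have ev: "\<forall>\<^sub>F e in at_right (0::real). \<forall>j. u j \<noteq> 0 \<longrightarrow> \<bar>e * (w \<bullet> V$j)\<bar> < \<bar>x \<bullet> V$j\<bar>"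
  proof (rule eventually_all_finite)
    fix j
    show "\<forall>\<^sub>F e in at_right (0::real). u j \<noteq> 0 \<longrightarrow> \<bar>e * (w \<bullet> V$j)\<bar> < \<bar>x \<bullet> V$j\<bar>"
    proof (cases "u j \<noteq> 0")
      case True
      have "((\<lambda>e. \<bar>e * (w \<bullet> V$j)\<bar>) \<longlongrightarrow> \<bar>0 * (w \<bullet> V$j)\<bar>) (at_right 0)"
        by (intro tendsto_intros)
      then have "\<forall>\<^sub>F e in at_right (0::real). \<bar>e * (w \<bullet> V$j)\<bar> < \<bar>x \<bullet> V$j\<bar>"
        using xnz[OF True] by (intro order_tendstoD(2)) auto
      then show ?thesis by eventually_elim auto
    qed auto
  qed
  have "\<forall>\<^sub>F e in at_right (0::real). 0 < e \<and> (\<forall>j. u j \<noteq> 0 \<longrightarrow> \<bar>e * (w \<bullet> V$j)\<bar> < \<bar>x \<bullet> V$j\<bar>)"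
    using ev eventually_at_right_less by (rule_tac eventually_conj) auto
  then obtain e where e0: "e > 0" and he: "\<And>j. u j \<noteq> 0 \<Longrightarrow> \<bar>e * (w \<bullet> V$j)\<bar> < \<bar>x \<bullet> V$j\<bar>"
    using eventually_happens'[OF trivial_limit_at_right_real] by blast
  define xp where "xp = x + e *\<^sub>R w"
  define xm where "xm = x - e *\<^sub>R w"
  have xpV: "xp \<bullet> V$j = x \<bullet> V$j + e * (w \<bullet> V$j)" for j
    by (simp add: xp_def inner_add_left)
  have xmV: "xm \<bullet> V$j = x \<bullet> V$j - e * (w \<bullet> V$j)" for j
    by (simp add: xm_def inner_diff_left)
  have parx: "x \<bullet> V$j = 0" "w \<bullet> V$j = l j * (w \<bullet> w)" if "u j = 0" for j
    using par[OF that] xw by (auto simp: inner_commute)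
  have gp: "\<forall>j. xp \<bullet> V$j \<noteq> 0" and gm: "\<forall>j. xm \<bullet> V$j \<noteq> 0"
    and sp: "\<And>j. xp \<bullet> V$j > 0 \<longleftrightarrow> (u j \<noteq> 0 \<and> x \<bullet> V$j > 0) \<or> (u j = 0 \<and> l j > 0)"
    and sm: "\<And>j. xm \<bullet> V$j > 0 \<longleftrightarrow> (u j \<noteq> 0 \<and> x \<bullet> V$j > 0) \<or> (u j = 0 \<and> l j < 0)"
  proof -
    have "xp \<bullet> V$j \<noteq> 0 \<and> xm \<bullet> V$j \<noteq> 0 \<and>
      (xp \<bullet> V$j > 0 \<longleftrightarrow> (u j \<noteq> 0 \<and> x \<bullet> V$j > 0) \<or> (u j = 0 \<and> l j > 0)) \<and>
      (xm \<bullet> V$j > 0 \<longleftrightarrow> (u j \<noteq> 0 \<and> x \<bullet> V$j > 0) \<or> (u j = 0 \<and> l j < 0))" for j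
    proof (cases "u j = 0")
      case True
      obtain k where k: "k > 0" "xp \<bullet> V$j = l j * k" "xm \<bullet> V$j = - (l j * k)"
        using e0 ww parx[OF True] by (intro that[of "e * (w \<bullet> w)"]) (auto simp: xpV xmV)
      show ?thesis using True k lnz[OF True]
        by (auto simp: zero_less_mult_iff mult_less_0_iff)
    next
      case False
      then show ?thesis using he[OF False] xnz[OF False]
        by (auto simp: xpV xmV abs_less_iff abs_if split: if_splits)
    qed
    then show "\<forall>j. xp \<bullet> V$j \<noteq> 0" "\<forall>j. xm \<bullet> V$j \<noteq> 0"
      "\<And>j. xp \<bullet> V$j > 0 \<longleftrightarrow> (u j \<noteq> 0 \<and> x \<bullet> V$j > 0) \<or> (u j = 0 \<and> l j > 0)"
      "\<And>j. xm \<bullet> V$j > 0 \<longleftrightarrow> (u j \<noteq> 0 \<and> x \<bullet> V$j > 0) \<or> (u j = 0 \<and> l j < 0)"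
      by blast+
  qed
  define A where "A = {j. u j \<noteq> 0 \<and> x \<bullet> V$j > 0}"
  define P where "P = {j. u j = 0 \<and> l j > 0}"
  define N where "N = {j. u j = 0 \<and> l j < 0}"
  have "{j. xp \<bullet> V$j > 0} = A \<union> P" using sp by (auto simp: A_def P_def)
  then have cp: "card (A \<union> P) = CARD('n)" using generic_struct(3)[OF gp] by simp
  have "{j. xm \<bullet> V$j > 0} = A \<union> N" using sm by (auto simp: A_def N_def)
  then have cm: "card (A \<union> N) = CARD('n)" using generic_struct(3)[OF gm] by simp
  have "card (A \<union> P) = card A + card P" by (rule card_Un_disjoint) (auto simp: A_def P_def)
  moreover have "card (A \<union> N) = card A + card N" by (rule card_Un_disjoint) (auto simp: A_def N_def)
  ultimately have "card P = card N" using cp cm by simp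
  moreover have "i \<in> P" using ww by (simp add: P_def u_def l_def w_def)
  ultimately have "card N > 0" by (metis card_gt_0_iff empty_iff finite)
  then obtain j where "j \<in> N" by (metis card_gt_0_iff ex_in_conv)
  then show ?thesis using par by (auto simp: N_def w_def)
qed

end



context two begin

lemma struct_main:
  "\<exists>(p :: 'n + 'n \<Rightarrow> 'k) (B :: real ^ 'n ^ 'n) (D :: real ^ 'n ^ 'n).
            bij p \<and> invertible B
          \<and> (\<forall>i j. i \<noteq> j \<longrightarrow> D $ i $ j = 0) \<and> (\<forall>i. D $ i $ i > 0)
          \<and> (\<forall>i. V $ p (Inl i) = B $ i)
          \<and> (\<forall>i. V $ p (Inr i) = (- (D ** B)) $ i)"
proof -
  define q where "q i = (SOME j. \<exists>c. c < 0 \<and> V$j = c *\<^sub>R V$i)" for i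
  have hq: "\<exists>c. c < 0 \<and> V$(q i) = c *\<^sub>R V$i" for i
    unfolding q_def by (rule someI_ex) (rule pairing)
  define c where "c i = (SOME c. c < 0 \<and> V$(q i) = c *\<^sub>R V$i)" for i
  have hc: "c i < 0 \<and> V$(q i) = c i *\<^sub>R V$i" for i
    unfolding c_def by (rule someI_ex) (rule hq)
  have qc: "\<And>i. c i < 0" "\<And>i. V$(q i) = c i *\<^sub>R V$i" using hc by auto
  obtain z where z: "\<forall>v\<in>range (\<lambda>j. V$j). z \<bullet> v \<noteq> 0"
  proof -
    have "0 \<notin> range (\<lambda>j. V$j)" using nonzero by auto
    then show ?thesis using exists_generic[of "range (\<lambda>j. V$j)"] that by auto
  qed
  have g: "\<forall>j. z \<bullet> V$j \<noteq> 0" using z by auto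
  define E where "E = {j. z \<bullet> V$j > 0}"
  note st = generic_struct[OF g, folded E_def]
  obtain e where e: "bij_betw e (UNIV :: 'n set) E"
    using finite_same_card_bij[of "UNIV :: 'n set" E] st(3) by auto
  have eE: "e a \<in> E" for a using e by (auto simp: bij_betw_def)
  have einj: "inj e" using e by (simp add: bij_betw_def)
  have qE: "q j \<notin> E" if "j \<in> E" for j
  proof -
    have "z \<bullet> V$(q j) = c j * (z \<bullet> V$j)" by (simp add: qc(2))
    also have "\<dots> < 0" using qc(1)[of j] that by (simp add: E_def mult_neg_pos)
    finally show ?thesis by (simp add: E_def)
  qed
  have parE: "a = b" if "a \<in> E" "b \<in> E" "V$b = t *\<^sub>R V$a" for a b t
  proof (rule ccontr)
    assume ab: "a \<noteq> b"
    then have ne: "V$a \<noteq> V$b" using st(1) that(1,2) by (meson inj_onD)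
    have "V$a \<in> (\<lambda>j. V$j) ` E - {V$b}" using ne that(1) by auto
    then have "V$b \<in> span ((\<lambda>j. V$j) ` E - {V$b})"
      unfolding that(3) by (intro span_mul span_base)
    then have "dependent ((\<lambda>j. V$j) ` E)" using that(2) unfolding dependent_def by blast
    then show False using st(2) by simp
  qed
  define p where "p = (\<lambda>s. case s of Inl a \<Rightarrow> e a | Inr a \<Rightarrow> q (e a))"
  have injp: "inj p"
  proof (rule injI)
    fix s t assume pst: "p s = p t"
    show "s = t"
    proof (cases s; cases t)
      fix a b assume "s = Inl a" "t = Inl b" then show ?thesis using pst einj by (auto simp: p_def inj_eq)
    next
      fix a b assume "s = Inl a" "t = Inr b" then show ?thesis using pst eE[of a] qE[OF eE[of b]] by (auto simp: p_def)
    next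
      fix a b assume "s = Inr a" "t = Inl b" then show ?thesis using pst eE[of b] qE[OF eE[of a]] by (auto simp: p_def)
    next
      fix a b assume s: "s = Inr a" and t: "t = Inr b"
      then have qq: "q (e a) = q (e b)" using pst by (simp add: p_def)
      have "c (e b) *\<^sub>R V$(e b) = c (e a) *\<^sub>R V$(e a)" using qc(2)[of "e a"] qc(2)[of "e b"] qq by simp
      then have "(1 / c (e b)) *\<^sub>R (c (e b) *\<^sub>R V$(e b)) = (1 / c (e b)) *\<^sub>R (c (e a) *\<^sub>R V$(e a))"
        by simp
      moreover have "c (e b) \<noteq> 0" using qc(1)[of "e b"] by simp
      ultimately have "V$(e b) = (c (e a) / c (e b)) *\<^sub>R V$(e a)"
        by simp
      then have "e a = e b" using parE eE by blast
      then show ?thesis using einj s t by (simp add: inj_eq)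
    qed
  qed
  have "card (range p) = CARD('k)" using injp card2 by (simp add: card_image card_UNIV_sum)
  then have "range p = UNIV" by (intro card_eq_UNIV_imp_eq_UNIV) auto
  with injp have bijp: "bij p" by (simp add: bij_def)
  define B :: "real^'n^'n" where "B = (\<chi> a. V$(e a))"
  define D :: "real^'n^'n" where "D = (\<chi> a b. if a = b then - c (e a) else 0)"
  have invB: "invertible B"
  proof -
    have eU: "range e = E" using e by (simp add: bij_betw_def)
    have "range (\<lambda>a. V$(e a)) = (\<lambda>j. V$j) ` E"
      unfolding eU[symmetric] by (simp add: image_image)
    moreover have "inj (\<lambda>a. V$(e a))"
      using st(1) einj eE by (auto simp: inj_def inj_on_def)
    ultimately show ?thesis using inv_rows[of "\<lambda>a. V$(e a)"] st(2) by (simp add: B_def)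
  qed
  have DB: "(D ** B) $ a = (- c (e a)) *\<^sub>R (B $ a)" for a
  proof -
    have "(D ** B) $ a $ b' = (- c (e a)) * B $ a $ b'" for b'
    proof -
      have "(D ** B) $ a $ b' = (\<Sum>k\<in>UNIV. (if a = k then - c (e a) else 0) * B $ k $ b')"
        by (simp add: matrix_matrix_mult_def D_def)
      also have "\<dots> = (\<Sum>k\<in>UNIV. if a = k then - c (e a) * B $ k $ b' else 0)"
        by (rule sum.cong) auto
      also have "\<dots> = - c (e a) * B $ a $ b'" by (simp add: sum.delta)
      finally show ?thesis .
    qed
    then show ?thesis by (simp add: vec_eq_iff)
  qed
  show ?thesis
  proof (intro exI conjI allI impI)
    show "bij p" by fact
    show "invertible B" by fact
    show "D $ i $ j = 0" if "i \<noteq> j" for i j using that by (simp add: D_def)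
    show "D $ i $ i > 0" for i using qc(1) by (simp add: D_def)
    show "V $ p (Inl i) = B $ i" for i by (simp add: p_def B_def)
    show "V $ p (Inr i) = (- (D ** B)) $ i" for i
    proof -
      have "V $ p (Inr i) = c (e i) *\<^sub>R V$(e i)" by (simp add: p_def qc(2))
      also have "\<dots> = c (e i) *\<^sub>R B$i" by (simp add: B_def)
      also have "\<dots> = (- (D ** B)) $ i" using DB[of i] by simp
      finally show ?thesis .
    qed
  qed
qed

end

theorem corollary1:
  fixes W :: "real ^ 'n ^ 'm" and V :: "real ^ 'n ^ 'k"
  shows "(CARD('m) < 2 * CARD('n) \<longrightarrow> \<not> inj (\<lambda>x. relu (W *v x)))
    \<and> ((CARD('k) = 2 * CARD('n) \<and> (\<forall>x. has_dss V x)) \<longrightarrow>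
        (\<exists>(p :: 'n + 'n \<Rightarrow> 'k) (B :: real ^ 'n ^ 'n) (D :: real ^ 'n ^ 'n).
            bij p \<and> invertible B
          \<and> (\<forall>i j. i \<noteq> j \<longrightarrow> D $ i $ j = 0) \<and> (\<forall>i. D $ i $ i > 0)
          \<and> (\<forall>i. V $ p (Inl i) = B $ i)
          \<and> (\<forall>i. V $ p (Inr i) = (- (D ** B)) $ i)))"
proof (intro conjI impI)
  assume "CARD('m) < 2 * CARD('n)"
  then show "\<not> inj (\<lambda>x. relu (W *v x))" by (rule part1)
next
  assume "CARD('k) = 2 * CARD('n) \<and> (\<forall>x. has_dss V x)"
  then interpret two V by unfold_locales auto
  show "\<exists>(p :: 'n + 'n \<Rightarrow> 'k) (B :: real ^ 'n ^ 'n) (D :: real ^ 'n ^ 'n).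
            bij p \<and> invertible B
          \<and> (\<forall>i j. i \<noteq> j \<longrightarrow> D $ i $ j = 0) \<and> (\<forall>i. D $ i $ i > 0)
          \<and> (\<forall>i. V $ p (Inl i) = B $ i)
          \<and> (\<forall>i. V $ p (Inr i) = (- (D ** B)) $ i)" by (rule struct_main)
qed


end
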